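(* Let $\star$ be a $t$-definer, let $(X_1,d_1^\star),\dots,(X_n,d_n^\star)$ be $\star$-metric spaces with $d_i^\star(x,y)\le 1$ for all $x,y\in X_i$ and $1\le i\le n$, and let $X=\bigoplus_{i=1}^n X_i$ be their disjoint union. Define $d_q^\star$ on $X$ by $d_q^\star(x,y)=d_i^\star(x,y)$ if $x,y\in X_i$ for some $i$, and $d_q^\star(x,y)=1$ otherwise. Then $(X,d_q^\star)$ is totally bounded if and only if every $(X_i,d_i^\star)$ is totally bounded.
   Context: A $t$-definer is a function $\star:[0,\infty)\times[0,\infty)\to[0,\infty)$ such that for all $a,b,c\ge 0$: $a\star b=b\star a$; $a\star(b\star c)=(a\star b)\star c$; if $a\le b$ then $a\star c\le b\star c$; $a\star 0=a$; and $\star$ is continuous in its first variable with respect to the Euclidean topology. Given a nonempty set $Y$, a $\star$-metric on $Y$ is a function $\rho:Y\times Y\to[0,\infty)$ such that for all $x,y,z\in Y$: $\rho(x,y)=0$ iff $x=y$; $\rho(x,y)=\rho(y,x)$; and $\rho(x,y)\le \rho(x,z)\star \rho(z,y)$. Under the stated bound, $d_q^\star$ is a $\star$-metric on $X$. A $\star$-metric space $(Y,\rho)$ is totally bounded if for every $\epsilon>0$ there is a finite set $F\subseteq Y$ with $Y=\bigcup_{x\in F}\{y\in Y:\rho(x,y)<\epsilon\}$. *)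

theory Defs
  imports "HOL-Analysis.Analysis"
begin

definition t_definer :: "(real \<Rightarrow> real \<Rightarrow> real) \<Rightarrow> bool" where
  "t_definer s \<longleftrightarrow>
     (\<forall>a b. 0 \<le> a \<longrightarrow> 0 \<le> b \<longrightarrow> 0 \<le> s a b) \<and>
     (\<forall>a b. 0 \<le> a \<longrightarrow> 0 \<le> b \<longrightarrow> s a b = s b a) \<and>
     (\<forall>a b c. 0 \<le> a \<longrightarrow> 0 \<le> b \<longrightarrow> 0 \<le> c \<longrightarrow> s a (s b c) = s (s a b) c) \<and>
     (\<forall>a b c. 0 \<le> a \<longrightarrow> 0 \<le> b \<longrightarrow> 0 \<le> c \<longrightarrow> a \<le> b \<longrightarrow> s a c \<le> s b c) \<and>
     (\<forall>a. 0 \<le> a \<longrightarrow> s a 0 = a) \<and>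
     (\<forall>b. 0 \<le> b \<longrightarrow> continuous_on {0..} (\<lambda>a. s a b))"

definition star_metric :: "(real \<Rightarrow> real \<Rightarrow> real) \<Rightarrow> 'a set \<Rightarrow> ('a \<Rightarrow> 'a \<Rightarrow> real) \<Rightarrow> bool" where
  "star_metric s Y \<rho> \<longleftrightarrow> Y \<noteq> {} \<and>
     (\<forall>x\<in>Y. \<forall>y\<in>Y. 0 \<le> \<rho> x y) \<and>
     (\<forall>x\<in>Y. \<forall>y\<in>Y. \<rho> x y = 0 \<longleftrightarrow> x = y) \<and>
     (\<forall>x\<in>Y. \<forall>y\<in>Y. \<rho> x y = \<rho> y x) \<and>
     (\<forall>x\<in>Y. \<forall>y\<in>Y. \<forall>z\<in>Y. \<rho> x y \<le> s (\<rho> x z) (\<rho> z y))"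

definition star_totally_bounded :: "'a set \<Rightarrow> ('a \<Rightarrow> 'a \<Rightarrow> real) \<Rightarrow> bool" where
  "star_totally_bounded Y \<rho> \<longleftrightarrow>
     (\<forall>e>0. \<exists>F. finite F \<and> F \<subseteq> Y \<and> Y = (\<Union>x\<in>F. {y\<in>Y. \<rho> x y < e}))"

definition disj_union :: "nat \<Rightarrow> (nat \<Rightarrow> 'a set) \<Rightarrow> (nat \<times> 'a) set" where
  "disj_union n X = Sigma {1..n} X"

definition dq :: "(nat \<Rightarrow> 'a \<Rightarrow> 'a \<Rightarrow> real) \<Rightarrow> (nat \<times> 'a) \<Rightarrow> (nat \<times> 'a) \<Rightarrow> real" where
  "dq d p q = (if fst p = fst q then d (fst p) (snd p) (snd q) else 1)"

end

theory Submission
  imports Defs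
begin

theorem theorem3p9:
  fixes s :: "real \<Rightarrow> real \<Rightarrow> real"
    and n :: nat
    and X :: "nat \<Rightarrow> 'a set"
    and d :: "nat \<Rightarrow> 'a \<Rightarrow> 'a \<Rightarrow> real"
  assumes "t_definer s"
    and "\<And>i. i \<in> {1..n} \<Longrightarrow> star_metric s (X i) (d i)"
    and "\<And>i x y. i \<in> {1..n} \<Longrightarrow> x \<in> X i \<Longrightarrow> y \<in> X i \<Longrightarrow> d i x y \<le> 1"
  shows "star_totally_bounded (disj_union n X) (dq d) \<longleftrightarrow>
         (\<forall>i\<in>{1..n}. star_totally_bounded (X i) (d i))"
proof
  assume H: "star_totally_bounded (disj_union n X) (dq d)"
  show "\<forall>i\<in>{1..n}. star_totally_bounded (X i) (d i)"
  proof
    fix i assume i: "i \<in> {1..n}"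
    have ne: "X i \<noteq> {}" using assms(2)[OF i] by (simp add: star_metric_def)
    show "star_totally_bounded (X i) (d i)"
      unfolding star_totally_bounded_def
    proof (intro allI impI)
      fix e :: real assume e: "e > 0"
      show "\<exists>F. finite F \<and> F \<subseteq> X i \<and> X i = (\<Union>x\<in>F. {y\<in>X i. d i x y < e})"
      proof (cases "e > 1")
        case True
        obtain a where a: "a \<in> X i" using ne by blast
        have "X i = (\<Union>x\<in>{a}. {y\<in>X i. d i x y < e})"
          using a True assms(3)[OF i a] by (intro equalityI subsetI) force+
        thus ?thesis using a by (intro exI[of _ "{a}"] conjI) auto
      next
        case False
        obtain F where F: "finite F" "F \<subseteq> disj_union n X"
          "disj_union n X = (\<Union>x\<in>F. {y\<in>disj_union n X. dq d x y < e})"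
          using H[unfolded star_totally_bounded_def, rule_format, OF e] by (elim exE conjE)
        let ?G = "snd ` {p\<in>F. fst p = i}"
        have "finite ?G" using F(1) by simp
        moreover have "?G \<subseteq> X i" using F(2) by (auto simp: disj_union_def)
        moreover have "X i \<subseteq> (\<Union>x\<in>?G. {y\<in>X i. d i x y < e})"
        proof
          fix y assume y: "y \<in> X i"
          hence "(i,y) \<in> disj_union n X" using i by (simp add: disj_union_def)
          hence "(i,y) \<in> (\<Union>x\<in>F. {y\<in>disj_union n X. dq d x y < e})" using F(3) by argo
          then obtain p where p: "p \<in> F" "dq d p (i,y) < e" by blast
          have "fst p = i" using p(2) False by (auto simp: dq_def split: if_splits)
          thus "y \<in> (\<Union>x\<in>?G. {y\<in>X i. d i x y < e})" using p y
            by (auto simp: dq_def) (metis prod.collapse)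
        qed
        hence "X i = (\<Union>x\<in>?G. {y\<in>X i. d i x y < e})" by (intro equalityI) auto
        note facts = calculation this
        show ?thesis by (rule exI[of _ ?G], intro conjI; rule facts)
      qed
    qed
  qed
next
  assume H: "\<forall>i\<in>{1..n}. star_totally_bounded (X i) (d i)"
  show "star_totally_bounded (disj_union n X) (dq d)"
    unfolding star_totally_bounded_def
  proof (intro allI impI)
    fix e :: real assume e: "e > 0"
    have "\<forall>i\<in>{1..n}. \<exists>F. finite F \<and> F \<subseteq> X i \<and> X i = (\<Union>x\<in>F. {y\<in>X i. d i x y < e})"
    proof
      fix i assume "i \<in> {1..n}"
      hence "star_totally_bounded (X i) (d i)" using H by blast
      from this[unfolded star_totally_bounded_def, rule_format, OF e]
      show "\<exists>F. finite F \<and> F \<subseteq> X i \<and> X i = (\<Union>x\<in>F. {y\<in>X i. d i x y < e})" .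
    qed
    from bchoice[OF this] obtain G where G0: "\<forall>i\<in>{1..n}. finite (G i) \<and> G i \<subseteq> X i \<and> X i = (\<Union>x\<in>G i. {y\<in>X i. d i x y < e})" ..
    have G: "\<And>i. i\<in>{1..n} \<Longrightarrow> finite (G i) \<and> G i \<subseteq> X i \<and> X i = (\<Union>x\<in>G i. {y\<in>X i. d i x y < e})"
      by (rule G0[rule_format])
    let ?F = "Sigma {1..n} G"
    have Gf: "\<And>i. i\<in>{1..n} \<Longrightarrow> finite (G i)" and Gs: "\<And>i. i\<in>{1..n} \<Longrightarrow> G i \<subseteq> X i"
      using G by blast+
    have "finite ?F" using Gf by auto
    moreover have "?F \<subseteq> disj_union n X" using Gs by (force simp: disj_union_def)
    moreover have "disj_union n X \<subseteq> (\<Union>x\<in>?F. {y\<in>disj_union n X. dq d x y < e})"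
    proof
      fix p assume p: "p \<in> disj_union n X"
      then obtain i y where iy: "p = (i,y)" "i \<in> {1..n}" "y \<in> X i" by (auto simp: disj_union_def)
      then obtain x where x: "x \<in> G i" "d i x y < e" using G[OF iy(2)] by blast
      show "p \<in> (\<Union>x\<in>?F. {y\<in>disj_union n X. dq d x y < e})"
        using p iy x by (auto simp: dq_def intro!: bexI[of _ "(i,x)"])
    qed
    moreover have "disj_union n X = (\<Union>x\<in>?F. {y\<in>disj_union n X. dq d x y < e})"
      using calculation(3) by (intro equalityI) auto
    note facts = calculation this
    show "\<exists>F. finite F \<and> F \<subseteq> disj_union n X \<and> disj_union n X = (\<Union>x\<in>F. {y\<in>disj_union n X. dq d x y < e})"
      by (rule exI[of _ ?F], intro conjI; rule facts)
  qed
qed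

end
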